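(* Let $\{u_1,\ldots,u_r\}\subset\mathcal E$ be a set of differential indeterminates over $\mathcal F$, and let $P_i(\mathbb U,\mathbb Y)\in\mathcal F\{\mathbb U,\mathbb Y\}$ $(i=1,\ldots,m)$ be differential polynomials in the differential indeterminates $\mathbb U=(u_1,\ldots,u_r)$ and $\mathbb Y=(y_1,\ldots,y_n)$. Let $\overline{\mathbb Y}=(\overline y_1,\ldots,\overline y_n)$ with $\overline y_i\in\mathcal E$ differentially free from $\mathcal F\langle\mathbb U\rangle$. If $P_i(\mathbb U,\overline{\mathbb Y})$ $(i=1,\ldots,m)$ are differentially dependent over $\mathcal F\langle\mathbb U\rangle$, then for any specialization of $\mathbb U$ to $\overline{\mathbb U}$ in $\mathcal F^r$, the elements $P_i(\overline{\mathbb U},\overline{\mathbb Y})$ $(i=1,\ldots,m)$ are differentially dependent over $\mathcal F$.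
   Context: $\mathcal F$ is an ordinary differential field of characteristic $0$ with derivation $\delta$ and $\mathcal E$ a fixed universal differential extension field of $\mathcal F$. A set $\Sigma$ is differentially dependent over a differential field $\mathcal G$ if the set of all derivatives of all elements of $\Sigma$ is algebraically dependent over $\mathcal G$. "$\overline{\mathbb Y}$ differentially free from $\mathcal F\langle\mathbb U\rangle$" means that $u_1,\dots,u_r$ are differential indeterminates (differentially independent) over $\mathcal F\langle\overline{\mathbb Y}\rangle$. *)

theory Defs
  imports Main "HOL-Library.Poly_Mapping"
begin

definition is_derivation :: "('a::field \<Rightarrow> 'a) \<Rightarrow> bool" where
  "is_derivation D \<longleftrightarrow>
     (\<forall>x y. D (x + y) = D x + D y) \<and> (\<forall>x y. D (x * y) = x * D y + D x * y)"

definition diff_subfield :: "('a::field \<Rightarrow> 'a) \<Rightarrow> 'a set \<Rightarrow> bool" where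
  "diff_subfield D K \<longleftrightarrow> 0 \<in> K \<and> 1 \<in> K \<and>
     (\<forall>x\<in>K. \<forall>y\<in>K. x + y \<in> K \<and> x * y \<in> K) \<and>
     (\<forall>x\<in>K. - x \<in> K \<and> inverse x \<in> K \<and> D x \<in> K)"

definition diff_field_gen :: "('a::field \<Rightarrow> 'a) \<Rightarrow> 'a set \<Rightarrow> 'a set \<Rightarrow> 'a set" where
  "diff_field_gen D K S = \<Inter>{L. diff_subfield D L \<and> K \<union> S \<subseteq> L}"

definition poly_eval :: "(('i \<Rightarrow>\<^sub>0 nat) \<Rightarrow>\<^sub>0 'a::comm_ring_1) \<Rightarrow> ('i \<Rightarrow> 'a) \<Rightarrow> 'a" where
  "poly_eval p x = (\<Sum>mo\<in>Poly_Mapping.keys p. Poly_Mapping.lookup p mo * (\<Prod>v\<in>Poly_Mapping.keys mo. x v ^ Poly_Mapping.lookup mo v))"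

definition alg_dependent :: "'a::field set \<Rightarrow> 'i set \<Rightarrow> ('i \<Rightarrow> 'a) \<Rightarrow> bool" where
  "alg_dependent G I x \<longleftrightarrow>
     (\<exists>p :: ('i \<Rightarrow>\<^sub>0 nat) \<Rightarrow>\<^sub>0 'a. p \<noteq> 0 \<and> (\<forall>mo. Poly_Mapping.lookup p mo \<in> G) \<and>
        (\<forall>mo\<in>Poly_Mapping.keys p. Poly_Mapping.keys mo \<subseteq> I) \<and> poly_eval p x = 0)"

definition diff_dependent :: "('a::field \<Rightarrow> 'a) \<Rightarrow> 'a set \<Rightarrow> 'i set \<Rightarrow> ('i \<Rightarrow> 'a) \<Rightarrow> bool" where
  "diff_dependent D G I x \<longleftrightarrow> alg_dependent G (I \<times> UNIV) (\<lambda>(i, k). (D ^^ k) (x i))"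

text \<open>Differential polynomials in U = (u_0..u_{r-1}), Y = (y_0..y_{n-1}):
  ordinary polynomials in the variables (Inl j, k) = u_j^(k) and (Inr i, k) = y_i^(k).\<close>
type_synonym 'a dpoly = "(((nat + nat) \<times> nat) \<Rightarrow>\<^sub>0 nat) \<Rightarrow>\<^sub>0 'a"

definition is_diff_poly :: "'a::comm_ring_1 set \<Rightarrow> nat \<Rightarrow> nat \<Rightarrow> 'a dpoly \<Rightarrow> bool" where
  "is_diff_poly F r n P \<longleftrightarrow> (\<forall>mo. Poly_Mapping.lookup P mo \<in> F) \<and>
     (\<forall>mo\<in>Poly_Mapping.keys P. \<forall>v\<in>Poly_Mapping.keys mo.
        (case fst v of Inl j \<Rightarrow> j < r | Inr i \<Rightarrow> i < n))"

definition dpoly_eval :: "('a::comm_ring_1 \<Rightarrow> 'a) \<Rightarrow> 'a dpoly \<Rightarrow> (nat \<Rightarrow> 'a) \<Rightarrow> (nat \<Rightarrow> 'a) \<Rightarrow> 'a" where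
  "dpoly_eval D P a b =
     poly_eval P (\<lambda>(v, k). (D ^^ k) (case v of Inl j \<Rightarrow> a j | Inr i \<Rightarrow> b i))"

end

theory Submission
  imports Defs "HOL-Computational_Algebra.Polynomial"
begin


definition mon :: "('i \<Rightarrow> 'b::comm_ring_1) \<Rightarrow> ('i \<Rightarrow>\<^sub>0 nat) \<Rightarrow> 'b" where
  "mon x mo = (\<Prod>v\<in>Poly_Mapping.keys mo. x v ^ Poly_Mapping.lookup mo v)"

definition Ev :: "('a::comm_ring_1 \<Rightarrow> 'b::comm_ring_1) \<Rightarrow> ('i \<Rightarrow> 'b) \<Rightarrow> (('i \<Rightarrow>\<^sub>0 nat) \<Rightarrow>\<^sub>0 'a) \<Rightarrow> 'b" where
  "Ev h x p = (\<Sum>mo\<in>Poly_Mapping.keys p. h (Poly_Mapping.lookup p mo) * mon x mo)"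

definition rh :: "('a::comm_ring_1 \<Rightarrow> 'b::comm_ring_1) \<Rightarrow> bool" where
  "rh h \<longleftrightarrow> h 0 = 0 \<and> h 1 = 1 \<and> (\<forall>a b. h (a + b) = h a + h b) \<and> (\<forall>a b. h (a * b) = h a * h b)"

lemma poly_eval_Ev: "poly_eval p x = Ev id x p"
  by (simp add: poly_eval_def Ev_def mon_def)

lemma mon_superset:
  assumes "finite S" "Poly_Mapping.keys mo \<subseteq> S"
  shows "mon x mo = (\<Prod>v\<in>S. x v ^ Poly_Mapping.lookup mo v)"
  unfolding mon_def
  by (rule prod.mono_neutral_left) (use assms in \<open>auto simp: in_keys_iff\<close>)

lemma mon_zero [simp]: "mon x 0 = 1"
  by (simp add: mon_def)

lemma mon_add: "mon x (a + b) = mon x a * mon x b"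
proof -
  let ?S = "Poly_Mapping.keys a \<union> Poly_Mapping.keys b"
  have f: "finite ?S" by simp
  have "mon x (a + b) = (\<Prod>v\<in>?S. x v ^ Poly_Mapping.lookup (a+b) v)"
    by (rule mon_superset[OF f]) (use keys_add[of a b] in blast)
  also have "\<dots> = (\<Prod>v\<in>?S. x v ^ Poly_Mapping.lookup a v * x v ^ Poly_Mapping.lookup b v)"
    by (rule prod.cong[OF refl]) (simp only: lookup_add power_add)
  also have "\<dots> = (\<Prod>v\<in>?S. x v ^ Poly_Mapping.lookup a v) * (\<Prod>v\<in>?S. x v ^ Poly_Mapping.lookup b v)"
    by (rule prod.distrib)
  also have "\<dots> = mon x a * mon x b"
    using mon_superset[OF f, of a x] mon_superset[OF f, of b x] by auto
  finally show ?thesis .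
qed

lemma Ev_superset:
  assumes "finite S" "Poly_Mapping.keys p \<subseteq> S" "h 0 = 0"
  shows "Ev h x p = (\<Sum>mo\<in>S. h (Poly_Mapping.lookup p mo) * mon x mo)"
  unfolding Ev_def
proof (rule sum.mono_neutral_left[OF assms(1,2)])
  show "\<forall>i\<in>S - Poly_Mapping.keys p. h (Poly_Mapping.lookup p i) * mon x i = 0"
    using assms(3) by (simp add: not_in_keys_iff_lookup_eq_zero)
qed

lemma Ev_zero [simp]: "Ev h x 0 = 0"
  by (simp add: Ev_def)

lemma Ev_add:
  assumes "rh h" shows "Ev h x (p + q) = Ev h x p + Ev h x q"
proof -
  let ?S = "Poly_Mapping.keys p \<union> Poly_Mapping.keys q"
  have f: "finite ?S" by simp
  have h0: "h 0 = 0" using assms by (simp add: rh_def)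
  have "Ev h x (p + q) = (\<Sum>mo\<in>?S. h (Poly_Mapping.lookup (p+q) mo) * mon x mo)"
    using Ev_superset[of ?S "p+q" h x] keys_add[of p q] h0 by simp
  also have "\<dots> = (\<Sum>mo\<in>?S. h (Poly_Mapping.lookup p mo) * mon x mo + h (Poly_Mapping.lookup q mo) * mon x mo)"
    using assms by (simp add: lookup_add rh_def algebra_simps)
  also have "\<dots> = Ev h x p + Ev h x q"
    using Ev_superset[of ?S p h x] Ev_superset[of ?S q h x] h0 by (simp add: sum.distrib)
  finally show ?thesis .
qed

lemma Ev_sum:
  assumes "rh h" shows "Ev h x (\<Sum>i\<in>I. f i) = (\<Sum>i\<in>I. Ev h x (f i))"
  by (induction I rule: infinite_finite_induct) (auto simp: Ev_add[OF assms])

lemma Ev_single: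
  assumes "rh h" shows "Ev h x (Poly_Mapping.single k c) = h c * mon x k"
  using assms by (cases "c = 0") (auto simp: Ev_def rh_def)

lemma pm_decomp: "p = (\<Sum>k\<in>Poly_Mapping.keys p. Poly_Mapping.single k (Poly_Mapping.lookup p k))"
proof (rule poly_mapping_eqI)
  fix k
  show "Poly_Mapping.lookup p k = Poly_Mapping.lookup (\<Sum>k\<in>Poly_Mapping.keys p. Poly_Mapping.single k (Poly_Mapping.lookup p k)) k"
    by (cases "k \<in> Poly_Mapping.keys p")
       (auto simp: lookup_sum lookup_single when_def in_keys_iff)
qed

lemma Ev_mult:
  assumes "rh h" shows "Ev h x (p * q) = Ev h x p * Ev h x q"
proof -
  have "p * q = (\<Sum>a\<in>Poly_Mapping.keys p. \<Sum>b\<in>Poly_Mapping.keys q.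
      Poly_Mapping.single a (Poly_Mapping.lookup p a) * Poly_Mapping.single b (Poly_Mapping.lookup q b))"
    by (subst pm_decomp[of p], subst pm_decomp[of q]) (simp add: sum_product)
  then have "Ev h x (p * q) = (\<Sum>a\<in>Poly_Mapping.keys p. \<Sum>b\<in>Poly_Mapping.keys q.
      h (Poly_Mapping.lookup p a) * mon x a * (h (Poly_Mapping.lookup q b) * mon x b))"
    using assms by (simp add: Ev_sum mult_single Ev_single mon_add rh_def mult_ac)
  also have "\<dots> = Ev h x p * Ev h x q"
    by (simp add: Ev_def sum_product)
  finally show ?thesis .
qed

lemma rh_id: "rh id" by (simp add: rh_def)
lemma rh_const: "rh (\<lambda>c. [:c:])" by (simp add: rh_def)

lemma Ev_one: "rh h \<Longrightarrow> Ev h x 1 = 1"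
  using Ev_single[of h x 0 1] by (simp add: rh_def)

lemma Ev_uminus:
  assumes "rh h" shows "Ev h x (- p) = - Ev h x p"
proof -
  have "Ev h x (p + - p) = 0" by simp
  then show ?thesis using Ev_add[OF assms, of x p "-p"] by (metis add.inverse_unique)
qed

lemma lookup_mult_single0:
  "Poly_Mapping.lookup (Q * Poly_Mapping.single 0 c) N = Poly_Mapping.lookup Q N * (c::'b::comm_ring_1)"
proof -
  have "Q * Poly_Mapping.single 0 c = (\<Sum>a\<in>Poly_Mapping.keys Q. Poly_Mapping.single a (Poly_Mapping.lookup Q a * c))"
    by (subst pm_decomp[of Q]) (simp add: sum_distrib_right mult_single)
  then have "Poly_Mapping.lookup (Q * Poly_Mapping.single 0 c) N = (\<Sum>a\<in>Poly_Mapping.keys Q. (Poly_Mapping.lookup Q a * c when a = N))"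
    by (simp add: lookup_sum lookup_single)
  also have "\<dots> = Poly_Mapping.lookup Q N * c"
    by (cases "N \<in> Poly_Mapping.keys Q") (auto simp: when_def in_keys_iff)
  finally show ?thesis .
qed

definition subring :: "'b::comm_ring_1 set \<Rightarrow> bool" where
  "subring S \<longleftrightarrow> 0 \<in> S \<and> 1 \<in> S \<and> (\<forall>x\<in>S. \<forall>y\<in>S. x + y \<in> S \<and> x * y \<in> S) \<and> (\<forall>x\<in>S. - x \<in> S)"

lemma subring_mult: "subring S \<Longrightarrow> x \<in> S \<Longrightarrow> y \<in> S \<Longrightarrow> x * y \<in> S"
  and subring_add: "subring S \<Longrightarrow> x \<in> S \<Longrightarrow> y \<in> S \<Longrightarrow> x + y \<in> S"
  and subring_uminus: "subring S \<Longrightarrow> x \<in> S \<Longrightarrow> - x \<in> S"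
  and subring_0: "subring S \<Longrightarrow> 0 \<in> S"
  and subring_1: "subring S \<Longrightarrow> 1 \<in> S"
  by (auto simp: subring_def)

lemma subring_sum: "subring S \<Longrightarrow> (\<And>i. i \<in> I \<Longrightarrow> f i \<in> S) \<Longrightarrow> sum f I \<in> S"
  by (induction I rule: infinite_finite_induct) (auto simp: subring_def)

lemma subring_prod: "subring S \<Longrightarrow> (\<And>i. i \<in> I \<Longrightarrow> f i \<in> S) \<Longrightarrow> prod f I \<in> S"
  by (induction I rule: infinite_finite_induct) (auto simp: subring_def)

lemma subring_power: "subring S \<Longrightarrow> x \<in> S \<Longrightarrow> x ^ n \<in> S"
  by (induction n) (auto simp: subring_def)

lemma mon_in: "subring S \<Longrightarrow> (\<And>v. v \<in> Poly_Mapping.keys mo \<Longrightarrow> x v \<in> S) \<Longrightarrow> mon x mo \<in> S"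
  unfolding mon_def by (rule subring_prod) (auto intro: subring_power)

lemma Ev_in:
  assumes "subring S" "\<And>mo. mo \<in> Poly_Mapping.keys p \<Longrightarrow> h (Poly_Mapping.lookup p mo) \<in> S"
    "\<And>mo v. mo \<in> Poly_Mapping.keys p \<Longrightarrow> v \<in> Poly_Mapping.keys mo \<Longrightarrow> x v \<in> S"
  shows "Ev h x p \<in> S"
  unfolding Ev_def using assms
  by (intro subring_sum subring_mult mon_in) auto

lemma mon_cong: "(\<And>v. v \<in> Poly_Mapping.keys mo \<Longrightarrow> x v = y v) \<Longrightarrow> mon x mo = mon y mo"
  unfolding mon_def by (rule prod.cong) auto

definition hom_on :: "'a::comm_ring_1 set \<Rightarrow> ('a \<Rightarrow> 'b::comm_ring_1) \<Rightarrow> bool" where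
  "hom_on S f \<longleftrightarrow> f 0 = 0 \<and> f 1 = 1 \<and> (\<forall>x\<in>S. \<forall>y\<in>S. f (x + y) = f x + f y \<and> f (x * y) = f x * f y)"

lemma hom_sum: "hom_on S f \<Longrightarrow> subring S \<Longrightarrow> (\<And>i. i \<in> I \<Longrightarrow> g i \<in> S) \<Longrightarrow> f (sum g I) = (\<Sum>i\<in>I. f (g i))"
proof (induction I rule: infinite_finite_induct)
  case (insert x F)
  then show ?case using subring_sum[of S F g] by (simp add: hom_on_def)
qed (auto simp: hom_on_def)

lemma hom_prod: "hom_on S f \<Longrightarrow> subring S \<Longrightarrow> (\<And>i. i \<in> I \<Longrightarrow> g i \<in> S) \<Longrightarrow> f (prod g I) = (\<Prod>i\<in>I. f (g i))"
proof (induction I rule: infinite_finite_induct)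
  case (insert x F)
  then show ?case using subring_prod[of S F g] by (simp add: hom_on_def)
qed (auto simp: hom_on_def)

lemma hom_power: "hom_on S f \<Longrightarrow> subring S \<Longrightarrow> x \<in> S \<Longrightarrow> f (x ^ n) = f x ^ n"
proof (induction n)
  case (Suc n)
  then show ?case using subring_power[of S x n] by (simp add: hom_on_def)
qed (auto simp: hom_on_def)

lemma hom_mon: "hom_on S f \<Longrightarrow> subring S \<Longrightarrow> (\<And>v. v \<in> Poly_Mapping.keys mo \<Longrightarrow> x v \<in> S) \<Longrightarrow> f (mon x mo) = mon (f \<circ> x) mo"
  unfolding mon_def
  by (subst hom_prod[of S f]) (auto intro: subring_power simp: hom_power)

lemma hom_lin:
  assumes "hom_on S f" "subring S" "\<And>M. M \<in> T \<Longrightarrow> c M \<in> S"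
    "\<And>M v. M \<in> T \<Longrightarrow> v \<in> Poly_Mapping.keys M \<Longrightarrow> x v \<in> S"
  shows "f (\<Sum>M\<in>T. c M * mon x M) = (\<Sum>M\<in>T. f (c M) * mon (f \<circ> x) M)"
proof -
  have "f (\<Sum>M\<in>T. c M * mon x M) = (\<Sum>M\<in>T. f (c M * mon x M))"
    using assms by (intro hom_sum) (auto intro!: mon_in subring_mult)
  also have "\<dots> = (\<Sum>M\<in>T. f (c M) * mon (f \<circ> x) M)"
    using assms by (intro sum.cong refl) (simp add: hom_on_def mon_in hom_mon[of S f])
  finally show ?thesis .
qed

lemma poly_mon: "poly (mon w M) t = mon (\<lambda>v. poly (w v) t) M"
  by (simp add: mon_def poly_prod)

lemma poly_Ev_const: "poly (Ev (\<lambda>c. [:c:]) W Q) t = poly_eval Q (\<lambda>v. poly (W v) t)"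
  by (simp add: Ev_def poly_eval_Ev poly_sum poly_mon)



lemma der_add: "is_derivation D \<Longrightarrow> D (x + y) = D x + D y"
  and der_mult: "is_derivation D \<Longrightarrow> D (x * y) = x * D y + D x * y"
  unfolding is_derivation_def by auto

lemma der_0: "is_derivation D \<Longrightarrow> D 0 = 0"
proof -
  assume d: "is_derivation D"
  have "D (0 + 0) = D 0 + D 0" by (rule der_add[OF d])
  then have "D 0 = D 0 + D 0" by (simp only: add_0_right)
  then show ?thesis using add_cancel_right_right[of "D 0" "D 0"] by blast
qed

lemma der_uminus: "is_derivation D \<Longrightarrow> D (- x) = - D x"
proof -
  assume d: "is_derivation D"
  have "D (x + - x) = D x + D (- x)" by (rule der_add[OF d])
  then have "D x + D (- x) = 0" using der_0[OF d] by simp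
  then show ?thesis by (simp add: add.inverse_unique)
qed

lemma der_1: "is_derivation D \<Longrightarrow> D 1 = 0"
proof -
  assume d: "is_derivation D"
  have "D (1 * 1) = 1 * D 1 + D 1 * 1" by (rule der_mult[OF d])
  then have "D 1 = D 1 + D 1" by (simp only: mult_1_right mult_1_left)
  then show ?thesis using add_cancel_right_right[of "D 1" "D 1"] by blast
qed

lemma der_div:
  assumes "is_derivation D" "y \<noteq> 0"
  shows "D (x / y) = (D x * y - x * D y) / (y * y)"
proof -
  have "D x = D (x / y * y)" using assms by simp
  also have "\<dots> = x / y * D y + D (x / y) * y" by (rule der_mult[OF assms(1)])
  finally have "D (x / y) * y = D x - x / y * D y" by simp
  then have "D (x / y) = (D x - x / y * D y) / y" using assms by (simp add: field_simps)
  then show ?thesis using assms by (simp add: field_simps)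
qed

lemma diff_subfield_subring: "diff_subfield D G \<Longrightarrow> subring G"
  by (auto simp: diff_subfield_def subring_def)

lemma diff_subfield_D: "diff_subfield D G \<Longrightarrow> x \<in> G \<Longrightarrow> D x \<in> G"
  and diff_subfield_inverse: "diff_subfield D G \<Longrightarrow> x \<in> G \<Longrightarrow> inverse x \<in> G"
  by (auto simp: diff_subfield_def)

lemma diff_subfield_Dk: "diff_subfield D G \<Longrightarrow> x \<in> G \<Longrightarrow> (D ^^ k) x \<in> G"
  by (induction k) (auto simp: diff_subfield_D)

lemma diff_field_gen_subfield: "diff_subfield D (diff_field_gen D K S)"
  unfolding diff_field_gen_def diff_subfield_def by blast

lemma diff_field_gen_incl: "K \<union> S \<subseteq> diff_field_gen D K S"
  unfolding diff_field_gen_def by blast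

lemma diff_field_gen_least: "diff_subfield D L \<Longrightarrow> K \<union> S \<subseteq> L \<Longrightarrow> diff_field_gen D K S \<subseteq> L"
  unfolding diff_field_gen_def by blast

definition Ax :: "('a \<Rightarrow> 'a) \<Rightarrow> (nat \<Rightarrow> 'a) \<Rightarrow> nat \<times> nat \<Rightarrow> 'a" where
  "Ax D u = (\<lambda>(j, k). (D ^^ k) (u j))"

definition Polys :: "'a::comm_ring_1 set \<Rightarrow> nat \<Rightarrow> (((nat \<times> nat) \<Rightarrow>\<^sub>0 nat) \<Rightarrow>\<^sub>0 'a) set" where
  "Polys G r = {Q. (\<forall>mo. Poly_Mapping.lookup Q mo \<in> G) \<and>
      (\<forall>mo\<in>Poly_Mapping.keys Q. Poly_Mapping.keys mo \<subseteq> {..<r} \<times> UNIV)}"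

inductive_set RS :: "('a::field \<Rightarrow> 'a) \<Rightarrow> (nat \<Rightarrow> 'a) \<Rightarrow> nat \<Rightarrow> 'a set \<Rightarrow> 'a set"
  for D u r G where
  base: "c \<in> G \<Longrightarrow> c \<in> RS D u r G"
| var: "j < r \<Longrightarrow> (D ^^ k) (u j) \<in> RS D u r G"
| add: "x \<in> RS D u r G \<Longrightarrow> y \<in> RS D u r G \<Longrightarrow> x + y \<in> RS D u r G"
| mult: "x \<in> RS D u r G \<Longrightarrow> y \<in> RS D u r G \<Longrightarrow> x * y \<in> RS D u r G"
| neg: "x \<in> RS D u r G \<Longrightarrow> - x \<in> RS D u r G"

lemma RS_subring: "subring G \<Longrightarrow> subring (RS D u r G)"
  unfolding subring_def by (blast intro: RS.base RS.add RS.mult RS.neg)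

lemma RS_mono': assumes "G \<subseteq> G'" "x \<in> RS D u r G" shows "x \<in> RS D u r G'"
  using assms(2)
proof induction
  case (base c) then show ?case using assms(1) by (blast intro: RS.base)
next
  case (var j k) then show ?case by (rule RS.var)
qed (auto intro: RS.add RS.mult RS.neg)

lemma RS_mono: "G \<subseteq> G' \<Longrightarrow> RS D u r G \<subseteq> RS D u r G'"
  using RS_mono' by blast

lemma RS_D:
  assumes "is_derivation D" "diff_subfield D G" "x \<in> RS D u r G"
  shows "D x \<in> RS D u r G"
  using assms(3)
proof induction
  case (base c) then show ?case using assms(2) by (auto intro: RS.base simp: diff_subfield_D)
next
  case (var j k)
  then have "(D ^^ Suc k) (u j) \<in> RS D u r G" by (rule RS.var)
  then show ?case by simp
next
  case (add x y) then show ?case using assms(1) by (simp add: der_add RS.add)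
next
  case (mult x y) then show ?case using assms(1) by (simp add: der_mult RS.add RS.mult)
next
  case (neg x) then show ?case using assms(1) by (simp add: der_uminus RS.neg)
qed

lemma RS_Dk:
  "is_derivation D \<Longrightarrow> diff_subfield D G \<Longrightarrow> x \<in> RS D u r G \<Longrightarrow> (D ^^ k) x \<in> RS D u r G"
  by (induction k) (auto simp: RS_D)

lemma Polys_0: "0 \<in> Polys G r \<longleftrightarrow> 0 \<in> G"
  by (simp add: Polys_def)

lemma Polys_add: 
  assumes "subring G" "p \<in> Polys G r" "q \<in> Polys G r" shows "p + q \<in> Polys G r"
proof -
  have "\<forall>mo. Poly_Mapping.lookup (p + q) mo \<in> G"
    using assms by (auto simp: lookup_add subring_def Polys_def)
  moreover have "\<forall>mo\<in>Poly_Mapping.keys (p + q). Poly_Mapping.keys mo \<subseteq> {..<r} \<times> UNIV"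
    using keys_add[of p q] assms(2,3) unfolding Polys_def by blast
  ultimately show ?thesis by (simp add: Polys_def)
qed

lemma Polys_uminus: "subring G \<Longrightarrow> p \<in> Polys G r \<Longrightarrow> - p \<in> Polys G r"
  unfolding Polys_def by (auto simp: subring_def)

lemma Polys_sum: "subring G \<Longrightarrow> (\<And>i. i \<in> I \<Longrightarrow> f i \<in> Polys G r) \<Longrightarrow> sum f I \<in> Polys G r"
  by (induction I rule: infinite_finite_induct) (auto simp: Polys_add Polys_0 subring_def)

lemma Polys_single:
  "subring G \<Longrightarrow> c \<in> G \<Longrightarrow> Poly_Mapping.keys mo \<subseteq> {..<r} \<times> UNIV \<Longrightarrow> Poly_Mapping.single mo c \<in> Polys G r"
  unfolding Polys_def by (auto simp: lookup_single when_def subring_def)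

lemma Polys_lookup: "p \<in> Polys G r \<Longrightarrow> Poly_Mapping.lookup p mo \<in> G"
  and Polys_keys: "p \<in> Polys G r \<Longrightarrow> mo \<in> Poly_Mapping.keys p \<Longrightarrow> Poly_Mapping.keys mo \<subseteq> {..<r} \<times> UNIV"
  unfolding Polys_def by auto

lemma Polys_mult:
  assumes "subring G" "p \<in> Polys G r" "q \<in> Polys G r"
  shows "p * q \<in> Polys G r"
proof -
  have "p * q = (\<Sum>a\<in>Poly_Mapping.keys p. \<Sum>b\<in>Poly_Mapping.keys q.
      Poly_Mapping.single a (Poly_Mapping.lookup p a) * Poly_Mapping.single b (Poly_Mapping.lookup q b))"
    by (subst pm_decomp[of p], subst pm_decomp[of q]) (simp add: sum_product)
  also have "\<dots> \<in> Polys G r"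
  proof (intro Polys_sum assms(1))
    fix a b assume ab: "a \<in> Poly_Mapping.keys p" "b \<in> Poly_Mapping.keys q"
    have "Poly_Mapping.keys (a + b) \<subseteq> {..<r} \<times> UNIV"
      using keys_add[of a b] Polys_keys[OF assms(2) ab(1)] Polys_keys[OF assms(3) ab(2)] by blast
    then show "Poly_Mapping.single a (Poly_Mapping.lookup p a) * Poly_Mapping.single b (Poly_Mapping.lookup q b) \<in> Polys G r"
      unfolding mult_single
      by (intro Polys_single assms(1) subring_mult Polys_lookup[OF assms(2)] Polys_lookup[OF assms(3)])
  qed
  finally show ?thesis .
qed

lemma poly_eval_add: "poly_eval (p + q) x = poly_eval p x + poly_eval q x"
  and poly_eval_mult: "poly_eval (p * q) x = poly_eval p x * poly_eval q x"
  and poly_eval_uminus: "poly_eval (- p) x = - poly_eval p x"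
  and poly_eval_single: "poly_eval (Poly_Mapping.single mo c) x = c * mon x mo"
  and poly_eval_sum: "poly_eval (sum f I) x = (\<Sum>i\<in>I. poly_eval (f i) x)"
  by (simp_all add: poly_eval_Ev Ev_add Ev_mult Ev_uminus Ev_single Ev_sum rh_id)

lemma mon_var: "mon x (Poly_Mapping.single v 1) = x v"
  by (simp add: mon_def)

lemma mon_var': "mon x (Poly_Mapping.single v (Suc 0)) = x v"
  by (simp add: mon_def)

lemma RS_rep:
  assumes "subring G" "x \<in> RS D u r G"
  shows "\<exists>Q\<in>Polys G r. poly_eval Q (Ax D u) = x"
  using assms(2)
proof induction
  case (base c)
  then show ?case using assms(1)
    by (intro bexI[of _ "Poly_Mapping.single 0 c"]) (auto simp: poly_eval_single Polys_single)
next
  case (var j k)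
  then show ?case using assms(1)
    by (intro bexI[of _ "Poly_Mapping.single (Poly_Mapping.single (j,k) 1) 1"])
       (auto simp: poly_eval_single mon_var' Ax_def subring_def intro!: Polys_single)
next
  case (add x y)
  then obtain Q1 Q2 where "Q1 \<in> Polys G r" "poly_eval Q1 (Ax D u) = x" "Q2 \<in> Polys G r" "poly_eval Q2 (Ax D u) = y"
    by blast
  then show ?case using assms(1) by (intro bexI[of _ "Q1 + Q2"]) (auto simp: poly_eval_add Polys_add)
next
  case (mult x y)
  then obtain Q1 Q2 where "Q1 \<in> Polys G r" "poly_eval Q1 (Ax D u) = x" "Q2 \<in> Polys G r" "poly_eval Q2 (Ax D u) = y"
    by blast
  then show ?case using assms(1) by (intro bexI[of _ "Q1 * Q2"]) (auto simp: poly_eval_mult Polys_mult)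
next
  case (neg x)
  then obtain Q1 where "Q1 \<in> Polys G r" "poly_eval Q1 (Ax D u) = x"
    by blast
  then show ?case using assms(1) by (intro bexI[of _ "- Q1"]) (auto simp: poly_eval_uminus Polys_uminus)
qed

lemma Polys_eval_RS:
  assumes "subring G" "Q \<in> Polys G r"
  shows "poly_eval Q (Ax D u) \<in> RS D u r G"
proof -
  have c: "id (Poly_Mapping.lookup Q mo) \<in> RS D u r G" for mo
    using Polys_lookup[OF assms(2)] by (auto intro: RS.base)
  have v: "Ax D u v \<in> RS D u r G" if "mo \<in> Poly_Mapping.keys Q" "v \<in> Poly_Mapping.keys mo" for mo v
  proof -
    obtain j k where v: "v = (j, k)" by (cases v)
    have "j < r" using Polys_keys[OF assms(2) that(1)] that(2) v by auto
    then show ?thesis unfolding v Ax_def by (simp add: RS.var)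
  qed
  have "Ev id (Ax D u) Q \<in> RS D u r G"
    using Ev_in[of "RS D u r G" Q id "Ax D u"] RS_subring[OF assms(1)] c v by blast
  then show ?thesis by (simp add: poly_eval_Ev)
qed



lemma hom_uminus:
  assumes "hom_on S f" "subring S" "x \<in> S" shows "f (- x) = - f x"
proof -
  have m: "- x \<in> S" using assms(2,3) by (rule subring_uminus)
  have "f (x + - x) = f x + f (- x)" using assms(1) assms(3) m unfolding hom_on_def by blast
  then have "f x + f (- x) = 0" using assms(1) by (simp add: hom_on_def)
  then show ?thesis by (simp add: add.inverse_unique)
qed

lemma poly_eval_mon: "poly_eval p x = (\<Sum>mo\<in>Poly_Mapping.keys p. Poly_Mapping.lookup p mo * mon x mo)"
  by (simp add: poly_eval_def mon_def)

lemma Polys_mono: "G \<subseteq> G' \<Longrightarrow> Polys G r \<subseteq> Polys G' r"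
  unfolding Polys_def by blast

lemma dpoly_eval_in:
  assumes "subring S" "F \<subseteq> S" "is_diff_poly F r n Q"
    "\<And>j k. j < r \<Longrightarrow> (D ^^ k) (a j) \<in> S" "\<And>i k. i < n \<Longrightarrow> (D ^^ k) (b i) \<in> S"
  shows "dpoly_eval D Q a b \<in> S"
proof -
  have c: "id (Poly_Mapping.lookup Q mo) \<in> S" for mo
    using assms(2,3) by (auto simp: is_diff_poly_def)
  have v: "(\<lambda>(v, k). (D ^^ k) (case v of Inl j \<Rightarrow> a j | Inr i \<Rightarrow> b i)) w \<in> S"
    if "mo \<in> Poly_Mapping.keys Q" "w \<in> Poly_Mapping.keys mo" for mo w
  proof -
    obtain v k where w: "w = (v, k)" by (cases w)
    have "case v of Inl j \<Rightarrow> j < r | Inr i \<Rightarrow> i < n"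
      using assms(3) that w unfolding is_diff_poly_def by fastforce
    then show ?thesis using assms(4,5) w by (cases v) auto
  qed
  have "Ev id (\<lambda>(v, k). (D ^^ k) (case v of Inl j \<Rightarrow> a j | Inr i \<Rightarrow> b i)) Q \<in> S"
    by (rule Ev_in[OF assms(1)]) (use c v in auto)
  then show ?thesis by (simp add: dpoly_eval_def poly_eval_Ev)
qed

lemma subring_polys:
  assumes "subring S"
  shows "subring {p :: 'b::comm_ring_1 poly. \<forall>i. coeff p i \<in> S}"
  unfolding subring_def
proof (intro conjI ballI; (elim CollectE)?)
  show "0 \<in> {p. \<forall>i. coeff p i \<in> S}" using assms by (simp add: subring_def)
  show "1 \<in> {p. \<forall>i. coeff p i \<in> S}" using assms by (simp add: subring_def)
next
  fix x y assume x: "\<forall>i. coeff x i \<in> S" and y: "\<forall>i. coeff y i \<in> S"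
  show "x + y \<in> {p. \<forall>i. coeff p i \<in> S}" using x y assms by (simp add: subring_add)
  show "x * y \<in> {p. \<forall>i. coeff p i \<in> S}"
    using x y assms by (auto simp: coeff_mult intro!: subring_sum subring_mult)
next
  fix x assume x: "\<forall>i. coeff x i \<in> S"
  show "- x \<in> {p. \<forall>i. coeff p i \<in> S}" using x assms by (simp add: subring_uminus)
qed



locale spec =
  fixes D :: "'a::field \<Rightarrow> 'a" and F :: "'a set" and r n :: nat and u ybar ubar :: "nat \<Rightarrow> 'a"
  assumes der: "is_derivation D"
    and Fsub: "diff_subfield D F"
    and indep: "\<not> diff_dependent D (diff_field_gen D F (ybar ` {..<n})) {..<r} u"
    and ubarF: "\<forall>j<r. ubar j \<in> F"
begin

lemma poly_eval_zero [simp]: "poly_eval 0 x = 0"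
  by (simp add: poly_eval_def)

lemma poly_eval_one [simp]: "poly_eval 1 x = 1"
  by (simp add: poly_eval_Ev Ev_one rh_id)

lemma poly_eval_diff: "poly_eval (p - q) x = poly_eval p x - poly_eval q x"
  using poly_eval_add[of p "- q" x] poly_eval_uminus[of q x] by simp

definition "L = diff_field_gen D F (ybar ` {..<n})"

lemma Lsub: "diff_subfield D L"
  unfolding L_def by (rule diff_field_gen_subfield)

lemma L_ring: "subring L"
  by (rule diff_subfield_subring[OF Lsub])

lemma F_ring: "subring F"
  by (rule diff_subfield_subring[OF Fsub])

lemma FL: "F \<subseteq> L"
  unfolding L_def using diff_field_gen_incl by blast

lemma ybarL: "i < n \<Longrightarrow> (D ^^ k) (ybar i) \<in> L"
  using diff_field_gen_incl[of F "ybar ` {..<n}" D] unfolding L_def[symmetric]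
  by (intro diff_subfield_Dk[OF Lsub]) auto

lemma ubarF': "j < r \<Longrightarrow> (D ^^ k) (ubar j) \<in> F"
  using ubarF by (intro diff_subfield_Dk[OF Fsub]) auto

abbreviation "RL \<equiv> RS D u r L"
abbreviation "RF \<equiv> RS D u r F"
abbreviation "A \<equiv> Ax D u"
abbreviation "B \<equiv> Ax D ubar"

lemma RL_ring: "subring RL" by (rule RS_subring[OF L_ring])
lemma RF_ring: "subring RF" by (rule RS_subring[OF F_ring])
lemma RF_RL: "RF \<subseteq> RL" by (rule RS_mono[OF FL])

lemma uniq: "Q \<in> Polys L r \<Longrightarrow> poly_eval Q A = 0 \<Longrightarrow> Q = 0"
  using indep unfolding diff_dependent_def alg_dependent_def L_def[symmetric] Polys_def Ax_def
  by blast

definition rep :: "'a \<Rightarrow> (((nat \<times> nat) \<Rightarrow>\<^sub>0 nat) \<Rightarrow>\<^sub>0 'a)" where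
  "rep x = (SOME Q. Q \<in> Polys L r \<and> poly_eval Q A = x)"

lemma rep_spec: "x \<in> RL \<Longrightarrow> rep x \<in> Polys L r \<and> poly_eval (rep x) A = x"
proof -
  assume "x \<in> RL"
  then have "\<exists>Q. Q \<in> Polys L r \<and> poly_eval Q A = x" using RS_rep[OF L_ring] by blast
  then show ?thesis unfolding rep_def by (rule someI_ex)
qed

lemma rep_unique:
  assumes "Q \<in> Polys L r" "poly_eval Q A = x"
  shows "rep x = Q"
proof -
  have x: "x \<in> RL" using Polys_eval_RS[OF L_ring assms(1), of D u] assms(2) by simp
  have "Q + - rep x \<in> Polys L r"
    using rep_spec[OF x] assms(1) by (intro Polys_add[OF L_ring] Polys_uminus[OF L_ring]) auto
  moreover have "poly_eval (Q + - rep x) A = 0"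
    using rep_spec[OF x] assms(2) by (simp add: poly_eval_add poly_eval_uminus poly_eval_diff)
  ultimately have "Q + - rep x = 0" by (rule uniq)
  then show ?thesis by (simp add: add.inverse_unique eq_neg_iff_add_eq_0)
qed

lemma rep_add: "x \<in> RL \<Longrightarrow> y \<in> RL \<Longrightarrow> rep (x + y) = rep x + rep y"
  using rep_spec[of x] rep_spec[of y]
  by (intro rep_unique Polys_add[OF L_ring]) (auto simp: poly_eval_add)

lemma rep_mult: "x \<in> RL \<Longrightarrow> y \<in> RL \<Longrightarrow> rep (x * y) = rep x * rep y"
  using rep_spec[of x] rep_spec[of y]
  by (intro rep_unique Polys_mult[OF L_ring]) (auto simp: poly_eval_mult)

lemma rep_const: "c \<in> L \<Longrightarrow> rep c = Poly_Mapping.single 0 c"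
  by (intro rep_unique Polys_single[OF L_ring]) (auto simp: poly_eval_single)

lemma rep_var: "j < r \<Longrightarrow> rep (A (j, k)) = Poly_Mapping.single (Poly_Mapping.single (j, k) 1) 1"
  by (intro rep_unique Polys_single[OF L_ring])
     (auto simp: poly_eval_single mon_var' subring_1[OF L_ring])

definition W :: "nat \<times> nat \<Rightarrow> 'a poly" where
  "W v = [:B v, A v - B v:]"

definition psi :: "'a \<Rightarrow> 'a poly" where
  "psi x = Ev (\<lambda>c. [:c:]) W (rep x)"

definition phi :: "'a \<Rightarrow> 'a" where
  "phi x = poly_eval (rep x) B"

lemma psi_hom: "hom_on RL psi"
proof -
  have "psi 0 = 0"
    using rep_const[OF subring_0[OF L_ring]] by (simp add: psi_def)
  moreover have "psi 1 = 1"
    using rep_const[OF subring_1[OF L_ring]] Ev_single[OF rh_const, of W 0 1] by (simp add: psi_def)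
  moreover have "\<forall>x\<in>RL. \<forall>y\<in>RL. psi (x + y) = psi x + psi y \<and> psi (x * y) = psi x * psi y"
    by (simp add: psi_def rep_add rep_mult Ev_add[OF rh_const] Ev_mult[OF rh_const])
  ultimately show ?thesis by (simp add: hom_on_def)
qed

lemma phi_hom: "hom_on RL phi"
proof -
  have "phi 0 = 0"
    using rep_const[OF subring_0[OF L_ring]] by (simp add: phi_def poly_eval_single)
  moreover have "phi 1 = 1"
    using rep_const[OF subring_1[OF L_ring]] by (simp add: phi_def poly_eval_single)
  moreover have "\<forall>x\<in>RL. \<forall>y\<in>RL. phi (x + y) = phi x + phi y \<and> phi (x * y) = phi x * phi y"
    by (simp add: phi_def rep_add rep_mult poly_eval_add poly_eval_mult)
  ultimately show ?thesis by (simp add: hom_on_def)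
qed

lemma poly_psi: "poly (psi x) t = poly_eval (rep x) (\<lambda>v. B v + t * (A v - B v))"
  unfolding psi_def poly_Ev_const by (simp add: W_def)

lemma poly_psi_1: "x \<in> RL \<Longrightarrow> poly (psi x) 1 = x"
  using rep_spec[of x] by (simp add: poly_psi)

lemma poly_psi_0: "poly (psi x) 0 = phi x"
  by (simp add: poly_psi phi_def)

lemma phi_L: "c \<in> L \<Longrightarrow> phi c = c"
  by (simp add: phi_def rep_const poly_eval_single)

lemma phi_A: "j < r \<Longrightarrow> phi (A (j, k)) = B (j, k)"
  by (simp add: phi_def rep_var poly_eval_single mon_var')

lemma phi_D: "x \<in> RL \<Longrightarrow> phi (D x) = D (phi x)"
proof (induction rule: RS.induct)
  case (base c)
  then show ?case using diff_subfield_D[OF Lsub base] by (simp add: phi_L)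
next
  case (var j k)
  have "phi (D ((D ^^ k) (u j))) = phi (A (j, Suc k))" by (simp add: Ax_def)
  also have "\<dots> = B (j, Suc k)" using var by (rule phi_A)
  also have "\<dots> = D (B (j, k))" by (simp add: Ax_def)
  also have "\<dots> = D (phi (A (j, k)))" using var by (simp add: phi_A)
  finally show ?case by (simp add: Ax_def)
next
  case (add x y)
  have Dx: "D x \<in> RL" "D y \<in> RL" using add by (auto intro: RS_D[OF der Lsub])
  have "phi (D (x + y)) = phi (D x + D y)" by (simp add: der_add[OF der])
  also have "\<dots> = phi (D x) + phi (D y)" using phi_hom Dx by (simp add: hom_on_def)
  also have "\<dots> = D (phi x + phi y)" using add by (simp add: der_add[OF der])
  also have "\<dots> = D (phi (x + y))" using phi_hom add by (simp add: hom_on_def)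
  finally show ?case .
next
  case (mult x y)
  have Dx: "D x \<in> RL" "D y \<in> RL" using mult by (auto intro: RS_D[OF der Lsub])
  have "phi (D (x * y)) = phi (x * D y + D x * y)" by (simp add: der_mult[OF der])
  also have "\<dots> = phi x * phi (D y) + phi (D x) * phi y"
    using phi_hom Dx mult.hyps RL_ring by (simp add: hom_on_def subring_mult)
  also have "\<dots> = D (phi x * phi y)" using mult by (simp add: der_mult[OF der])
  also have "\<dots> = D (phi (x * y))" using phi_hom mult by (simp add: hom_on_def)
  finally show ?case .
next
  case (neg x)
  have Dx: "D x \<in> RL" using neg by (auto intro: RS_D[OF der Lsub])
  have "phi (D (- x)) = phi (- D x)" by (simp add: der_uminus[OF der])
  also have "\<dots> = - phi (D x)" using hom_uminus[OF phi_hom RL_ring Dx] .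
  also have "\<dots> = D (- phi x)" using neg by (simp add: der_uminus[OF der])
  also have "\<dots> = D (phi (- x))" using hom_uminus[OF phi_hom RL_ring neg.hyps] by simp
  finally show ?case .
qed

lemma phi_Dk: "x \<in> RL \<Longrightarrow> phi ((D ^^ k) x) = (D ^^ k) (phi x)"
proof (induction k)
  case (Suc k)
  have "(D ^^ k) x \<in> RL" using Suc.prems by (rule RS_Dk[OF der Lsub])
  then show ?case using Suc by (simp add: phi_D)
qed simp

lemma psi_coeff_RF:
  assumes "c \<in> RF" shows "coeff (psi c) i \<in> RF"
proof -
  obtain Q where Q: "Q \<in> Polys F r" "poly_eval Q A = c"
    using RS_rep[OF F_ring assms] by blast
  have rQ: "rep c = Q"
    using Q Polys_mono[OF FL] by (intro rep_unique) auto
  let ?CS = "{p :: 'a poly. \<forall>i. coeff p i \<in> RF}"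
  have "Ev (\<lambda>c. [:c:]) W Q \<in> ?CS"
  proof (rule Ev_in[OF subring_polys[OF RF_ring]])
    fix mo assume "mo \<in> Poly_Mapping.keys Q"
    have "Poly_Mapping.lookup Q mo \<in> RF"
      using Polys_lookup[OF Q(1)] by (rule RS.base)
    then show "[:Poly_Mapping.lookup Q mo:] \<in> ?CS"
      using subring_0[OF RF_ring] by (auto simp: coeff_pCons split: nat.splits)
  next
    fix mo v assume mv: "mo \<in> Poly_Mapping.keys Q" "v \<in> Poly_Mapping.keys mo"
    obtain j k where v: "v = (j, k)" by (cases v)
    have j: "j < r" using Polys_keys[OF Q(1) mv(1)] mv(2) v by auto
    have b: "B v \<in> RF" using ubarF'[OF j, of k] v by (auto simp: Ax_def intro: RS.base)
    have a: "A v \<in> RF" using j v by (auto simp: Ax_def intro: RS.var)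
    have "A v + - B v \<in> RF"
      by (intro subring_add[OF RF_ring] a subring_uminus[OF RF_ring] b)
    then have ab: "A v - B v \<in> RF" by simp
    show "W v \<in> ?CS"
      using b ab subring_0[OF RF_ring] by (auto simp: W_def coeff_pCons split: nat.splits)
  qed
  then show ?thesis by (simp add: psi_def rQ)
qed

end



context spec
begin

definition "Fr = {x / y | x y. x \<in> RF \<and> y \<in> RF \<and> y \<noteq> 0}"

lemma RF_D: "x \<in> RF \<Longrightarrow> D x \<in> RF"
  by (rule RS_D[OF der Fsub])

lemma Fr_subfield: "diff_subfield D Fr"
  unfolding diff_subfield_def
proof (intro conjI ballI)
  have 0: "(0::'a) \<in> RF" and 1: "(1::'a) \<in> RF"
    by (simp_all add: subring_0[OF RF_ring] subring_1[OF RF_ring])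
  show "0 \<in> Fr" unfolding Fr_def using 0 1 by (intro CollectI exI[of _ 0] exI[of _ 1]) simp
  show "1 \<in> Fr" unfolding Fr_def using 1 by (intro CollectI exI[of _ 1] exI[of _ 1]) simp
next
  fix s t assume "s \<in> Fr" "t \<in> Fr"
  then obtain x1 y1 x2 y2 where s: "s = x1 / y1" "x1 \<in> RF" "y1 \<in> RF" "y1 \<noteq> 0"
    and t: "t = x2 / y2" "x2 \<in> RF" "y2 \<in> RF" "y2 \<noteq> 0"
    unfolding Fr_def by blast
  have "s + t = (x1 * y2 + x2 * y1) / (y1 * y2)" using s t by (simp add: field_simps)
  moreover have "x1 * y2 + x2 * y1 \<in> RF" "y1 * y2 \<in> RF" "y1 * y2 \<noteq> 0"
    using s t RF_ring by (simp_all add: subring_add subring_mult)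
  ultimately show "s + t \<in> Fr" unfolding Fr_def by blast
  have "s * t = (x1 * x2) / (y1 * y2)" using s t by (simp add: field_simps)
  moreover have "x1 * x2 \<in> RF" using s t RF_ring by (simp add: subring_mult)
  ultimately show "s * t \<in> Fr" using \<open>y1 * y2 \<in> RF\<close> \<open>y1 * y2 \<noteq> 0\<close> unfolding Fr_def by blast
next
  fix s assume "s \<in> Fr"
  then obtain x1 y1 where s: "s = x1 / y1" "x1 \<in> RF" "y1 \<in> RF" "y1 \<noteq> 0"
    unfolding Fr_def by blast
  have "- s = (- x1) / y1" using s by simp
  moreover have "- x1 \<in> RF" using s RF_ring by (simp add: subring_uminus)
  ultimately show "- s \<in> Fr" using s unfolding Fr_def by blast
  show "inverse s \<in> Fr"
  proof (cases "x1 = 0")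
    case True
    then have "inverse s = 0 / 1" using s by simp
    then show ?thesis unfolding Fr_def using subring_0[OF RF_ring] subring_1[OF RF_ring] by force
  next
    case False
    then have "inverse s = y1 / x1" using s by simp
    then show ?thesis unfolding Fr_def using s False by blast
  qed
  have "D s = (D x1 * y1 - x1 * D y1) / (y1 * y1)" using s der_div[OF der] by simp
  moreover have "D x1 * y1 - x1 * D y1 \<in> RF"
  proof -
    have "D x1 * y1 + - (x1 * D y1) \<in> RF"
      using s by (intro subring_add[OF RF_ring] subring_mult[OF RF_ring] subring_uminus[OF RF_ring] RF_D)
    then show ?thesis by simp
  qed
  moreover have "y1 * y1 \<in> RF" "y1 * y1 \<noteq> 0" using s RF_ring by (simp_all add: subring_mult)
  ultimately show "D s \<in> Fr" unfolding Fr_def by force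
qed

lemma K_Fr: "diff_field_gen D F (u ` {..<r}) \<subseteq> Fr"
proof (rule diff_field_gen_least[OF Fr_subfield])
  have "x \<in> Fr" if "x \<in> RF" for x
    using that subring_1[OF RF_ring] unfolding Fr_def by (intro CollectI exI[of _ x] exI[of _ 1]) simp
  moreover have "F \<subseteq> RF" by (auto intro: RS.base)
  moreover have "u j \<in> RF" if "j < r" for j
  proof -
    have "(D ^^ 0) (u j) \<in> RF" using that by (rule RS.var)
    then show ?thesis by simp
  qed
  ultimately show "F \<union> u ` {..<r} \<subseteq> Fr" by blast
qed

end



context spec
begin

lemma FRL: "F \<subseteq> RL"
  using FL by (auto intro: RS.base)

lemma var_RL: "j < r \<Longrightarrow> (D ^^ k) (u j) \<in> RL"
  by (rule RS.var)

lemma dpoly_var: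
  assumes "is_diff_poly F r n Q" "mo \<in> Poly_Mapping.keys Q" "w \<in> Poly_Mapping.keys mo"
  shows "\<exists>v k. w = (v, k) \<and> (case v of Inl j \<Rightarrow> j < r | Inr i \<Rightarrow> i < n)"
  using assms unfolding is_diff_poly_def by (cases w) fastforce

lemma phi_dpoly:
  assumes Q: "is_diff_poly F r n Q"
  shows "phi (dpoly_eval D Q u ybar) = dpoly_eval D Q ubar ybar"
proof -
  define X where "X = (\<lambda>(v, k). (D ^^ k) (case v of Inl j \<Rightarrow> u j | Inr i \<Rightarrow> ybar i))"
  define Xb where "Xb = (\<lambda>(v, k). (D ^^ k) (case v of Inl j \<Rightarrow> ubar j | Inr i \<Rightarrow> ybar i))"
  have cF: "Poly_Mapping.lookup Q mo \<in> F" for mo using Q by (simp add: is_diff_poly_def)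
  have XRL: "X w \<in> RL" and phiX: "phi (X w) = Xb w"
    if mw: "mo \<in> Poly_Mapping.keys Q" "w \<in> Poly_Mapping.keys mo" for mo w
  proof -
    obtain v k where w: "w = (v, k)" and vc: "case v of Inl j \<Rightarrow> j < r | Inr i \<Rightarrow> i < n"
      using dpoly_var[OF Q mw] by blast
    show "X w \<in> RL"
    proof (cases v)
      case (Inl j) then show ?thesis using vc w by (simp add: X_def var_RL)
    next
      case (Inr i) then show ?thesis using vc w ybarL[of i k] by (auto simp: X_def intro: RS.base)
    qed
    show "phi (X w) = Xb w"
    proof (cases v)
      case (Inl j)
      then have "X w = A (j, k)" "Xb w = B (j, k)" using w by (simp_all add: X_def Xb_def Ax_def)
      then show ?thesis using vc Inl by (simp add: phi_A)
    next
      case (Inr i) then show ?thesis using vc w ybarL[of i k] by (simp add: X_def Xb_def phi_L)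
    qed
  qed
  have "phi (dpoly_eval D Q u ybar) = phi (\<Sum>mo\<in>Poly_Mapping.keys Q. Poly_Mapping.lookup Q mo * mon X mo)"
    by (simp add: dpoly_eval_def poly_eval_mon X_def)
  also have "\<dots> = (\<Sum>mo\<in>Poly_Mapping.keys Q. phi (Poly_Mapping.lookup Q mo) * mon (phi \<circ> X) mo)"
    using cF FRL XRL by (intro hom_lin[OF phi_hom RL_ring]) auto
  also have "\<dots> = (\<Sum>mo\<in>Poly_Mapping.keys Q. Poly_Mapping.lookup Q mo * mon Xb mo)"
  proof (rule sum.cong[OF refl])
    fix mo assume mo: "mo \<in> Poly_Mapping.keys Q"
    have "phi (Poly_Mapping.lookup Q mo) = Poly_Mapping.lookup Q mo" using cF FL by (auto intro: phi_L)
    moreover have "mon (phi \<circ> X) mo = mon Xb mo" using phiX[OF mo] by (intro mon_cong) simp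
    ultimately show "phi (Poly_Mapping.lookup Q mo) * mon (phi \<circ> X) mo = Poly_Mapping.lookup Q mo * mon Xb mo"
      by simp
  qed
  also have "\<dots> = dpoly_eval D Q ubar ybar"
    by (simp add: dpoly_eval_def poly_eval_mon Xb_def)
  finally show ?thesis .
qed

end



context spec
begin

lemma ybar_RL: "i < n \<Longrightarrow> (D ^^ k) (ybar i) \<in> RL"
  by (rule RS.base[OF ybarL])

lemma ubarL: "j < r \<Longrightarrow> (D ^^ k) (ubar j) \<in> L"
  using ubarF' FL by blast

lemma monom_Suc_mult: "monom (1::'b::comm_ring_1) k * [:0, 1:] = monom 1 (Suc k)"
proof -
  have "[:0, 1:] = monom (1::'b) 1" by (simp add: monom_Suc)
  then show ?thesis by (simp add: mult_monom)
qed

lemma main: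
  assumes Pd: "\<forall>i<m. is_diff_poly F r n (P i)"
    and dep: "diff_dependent D (diff_field_gen D F (u ` {..<r})) {..<m} (\<lambda>i. dpoly_eval D (P i) u ybar)"
  shows "diff_dependent D F {..<m} (\<lambda>i. dpoly_eval D (P i) ubar ybar)"
proof -
  define z where "z = (\<lambda>(i, k). (D ^^ k) (dpoly_eval D (P i) u ybar))"
  define zb where "zb = (\<lambda>(i, k). (D ^^ k) (dpoly_eval D (P i) ubar ybar))"
  have "alg_dependent (diff_field_gen D F (u ` {..<r})) ({..<m} \<times> UNIV) z"
    using dep unfolding diff_dependent_def z_def by simp
  then obtain p where pall: "p \<noteq> 0 \<and> (\<forall>mo. Poly_Mapping.lookup p mo \<in> diff_field_gen D F (u ` {..<r})) \<and>
    (\<forall>mo\<in>Poly_Mapping.keys p. Poly_Mapping.keys mo \<subseteq> {..<m} \<times> UNIV) \<and> poly_eval p z = 0"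
    unfolding alg_dependent_def by (elim exE) (erule that)
  have p0: "p \<noteq> 0" using pall by (elim conjE)
  have pK: "\<forall>mo. Poly_Mapping.lookup p mo \<in> diff_field_gen D F (u ` {..<r})" using pall by (elim conjE)
  have pvars: "\<forall>mo\<in>Poly_Mapping.keys p. Poly_Mapping.keys mo \<subseteq> {..<m} \<times> UNIV" using pall by (elim conjE)
  have pz: "poly_eval p z = 0" using pall by (elim conjE)
  define S where "S = Poly_Mapping.keys p"
  have finS: "finite S" by (simp add: S_def)
  have Sne: "S \<noteq> {}" using p0 by (simp add: S_def)
  have vm: "\<exists>i k. v = (i, k) \<and> i < m" if "mo \<in> S" "v \<in> Poly_Mapping.keys mo" for mo v
    using pvars that unfolding S_def by (cases v) auto
  have zRL: "z v \<in> RL" and phiz: "phi (z v) = zb v" and zbL: "zb v \<in> L"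
    if mv: "mo \<in> S" "v \<in> Poly_Mapping.keys mo" for mo v
  proof -
    obtain i k where v: "v = (i, k)" and i: "i < m" using vm[OF mv] by blast
    have Pi: "is_diff_poly F r n (P i)" using Pd i by simp
    have z0: "dpoly_eval D (P i) u ybar \<in> RL"
      by (rule dpoly_eval_in[OF RL_ring FRL Pi var_RL ybar_RL])
    show "z v \<in> RL" unfolding v z_def using z0 by (simp add: RS_Dk[OF der Lsub])
    show "phi (z v) = zb v" unfolding v z_def zb_def using z0 by (simp add: phi_Dk phi_dpoly[OF Pi])
    have "dpoly_eval D (P i) ubar ybar \<in> L"
      by (rule dpoly_eval_in[OF L_ring FL Pi ubarL ybarL])
    then show "zb v \<in> L" unfolding v zb_def by (simp add: diff_subfield_Dk[OF Lsub])
  qed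
  have ex1: "\<forall>mo\<in>S. \<exists>a b. a \<in> RF \<and> b \<in> RF \<and> b \<noteq> 0 \<and> Poly_Mapping.lookup p mo = a / b"
  proof
    fix mo
    have "Poly_Mapping.lookup p mo \<in> Fr" using pK K_Fr by (meson subsetD)
    then show "\<exists>a b. a \<in> RF \<and> b \<in> RF \<and> b \<noteq> 0 \<and> Poly_Mapping.lookup p mo = a / b"
      unfolding Fr_def by blast
  qed
  obtain nu where ex2: "\<forall>mo\<in>S. \<exists>b. nu mo \<in> RF \<and> b \<in> RF \<and> b \<noteq> 0 \<and> Poly_Mapping.lookup p mo = nu mo / b"
    using bchoice[OF ex1] by blast
  obtain de where nd: "\<forall>mo\<in>S. nu mo \<in> RF \<and> de mo \<in> RF \<and> de mo \<noteq> 0 \<and> Poly_Mapping.lookup p mo = nu mo / de mo"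
    using bchoice[OF ex2] by blast
  define Y where "Y = (\<Prod>mo\<in>S. de mo)"
  define c where "c mo = nu mo * (\<Prod>mo'\<in>S - {mo}. de mo')" for mo
  have cRF: "c mo \<in> RF" if "mo \<in> S" for mo
    unfolding c_def using nd that
    by (intro subring_mult[OF RF_ring] subring_prod[OF RF_ring]) auto
  have Ynz: "Y \<noteq> 0" unfolding Y_def using nd finS by simp
  have c_eq: "c mo = Y * Poly_Mapping.lookup p mo" if "mo \<in> S" for mo
  proof -
    have "Y = de mo * (\<Prod>mo'\<in>S - {mo}. de mo')" unfolding Y_def using finS that by (rule prod.remove)
    then show ?thesis using nd that by (simp add: c_def field_simps)
  qed
  have cnz: "c mo \<noteq> 0" if "mo \<in> S" for mo
    using c_eq[OF that] Ynz that by (simp add: S_def in_keys_iff)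
  have rel: "(\<Sum>mo\<in>S. c mo * mon z mo) = 0"
  proof -
    have "(\<Sum>mo\<in>S. c mo * mon z mo) = Y * (\<Sum>mo\<in>S. Poly_Mapping.lookup p mo * mon z mo)"
      by (simp add: sum_distrib_left c_eq mult.assoc)
    also have "\<dots> = 0" using pz by (simp add: poly_eval_mon S_def)
    finally show ?thesis .
  qed
  have "psi (\<Sum>mo\<in>S. c mo * mon z mo) = (\<Sum>mo\<in>S. psi (c mo) * mon (psi \<circ> z) mo)"
    using cRF RF_RL zRL by (intro hom_lin[OF psi_hom RL_ring]) auto
  then have rel2: "(\<Sum>mo\<in>S. psi (c mo) * mon (psi \<circ> z) mo) = 0"
    using rel psi_hom by (simp add: hom_on_def)
  have psinz: "psi (c mo) \<noteq> 0" if "mo \<in> S" for mo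
  proof
    assume "psi (c mo) = 0"
    then have "poly (psi (c mo)) 1 = 0" by simp
    then show False using poly_psi_1[of "c mo"] cRF[OF that] RF_RL cnz[OF that] by auto
  qed
  define ord where "ord mo = order 0 (psi (c mo))" for mo
  define k where "k = Min (ord ` S)"
  obtain M0 where M0: "M0 \<in> S" "ord M0 = k"
  proof -
    have "k \<in> ord ` S" unfolding k_def using finS Sne by (intro Min_in) auto
    then show ?thesis using that by blast
  qed
  have kle: "k \<le> ord mo" if "mo \<in> S" for mo
    unfolding k_def using finS that by simp
  define g where "g mo = psi (c mo) div monom 1 k" for mo
  have geq: "psi (c mo) = monom 1 k * g mo" if "mo \<in> S" for mo
  proof -
    have "monom 1 k dvd psi (c mo)"
      using monom_1_dvd_iff[OF psinz[OF that]] kle[OF that] by (simp add: ord_def)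
    then show ?thesis by (simp add: g_def)
  qed
  have "monom 1 k * (\<Sum>mo\<in>S. g mo * mon (psi \<circ> z) mo) = (\<Sum>mo\<in>S. psi (c mo) * mon (psi \<circ> z) mo)"
    by (simp add: sum_distrib_left geq mult.assoc)
  then have gsum: "(\<Sum>mo\<in>S. g mo * mon (psi \<circ> z) mo) = 0"
    using rel2 by simp
  define d where "d mo = poly (g mo) 0" for mo
  have rel3: "(\<Sum>mo\<in>S. d mo * mon zb mo) = 0"
  proof -
    have "poly (\<Sum>mo\<in>S. g mo * mon (psi \<circ> z) mo) 0 = (\<Sum>mo\<in>S. d mo * mon (\<lambda>v. poly (psi (z v)) 0) mo)"
      by (simp add: poly_sum poly_mon d_def)
    also have "\<dots> = (\<Sum>mo\<in>S. d mo * mon zb mo)"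
    proof (rule sum.cong[OF refl])
      fix mo assume "mo \<in> S"
      then have "mon (\<lambda>v. poly (psi (z v)) 0) mo = mon zb mo"
        by (intro mon_cong) (simp add: poly_psi_0 phiz)
      then show "d mo * mon (\<lambda>v. poly (psi (z v)) 0) mo = d mo * mon zb mo" by simp
    qed
    finally show ?thesis using gsum by simp
  qed
  have dRF: "d mo \<in> RF" if "mo \<in> S" for mo
  proof -
    have "coeff (psi (c mo)) k = coeff (g mo) 0"
      using geq[OF that] by (simp add: coeff_monom_mult)
    then show ?thesis using psi_coeff_RF[OF cRF[OF that], of k] by (simp add: d_def poly_0_coeff_0)
  qed
  have dM0: "d M0 \<noteq> 0"
  proof
    assume "d M0 = 0"
    then have "[:- 0, 1:] dvd g M0" by (simp add: d_def poly_eq_0_iff_dvd)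
    then obtain h where "g M0 = [:0, 1:] * h" by auto
    then have "psi (c M0) = monom 1 (Suc k) * h"
      using geq[OF M0(1)] by (simp add: monom_Suc_mult[symmetric] mult.assoc)
    then have "monom 1 (Suc k) dvd psi (c M0)" by simp
    then have "Suc k \<le> ord M0"
      using monom_1_dvd_iff[OF psinz[OF M0(1)]] by (simp add: ord_def)
    then show False using M0(2) by simp
  qed
  have ex3: "\<forall>mo\<in>S. \<exists>Q. Q \<in> Polys F r \<and> poly_eval Q A = d mo"
  proof
    fix mo assume "mo \<in> S"
    then have "d mo \<in> RF" by (rule dRF)
    then have "\<exists>Q\<in>Polys F r. poly_eval Q A = d mo" by (rule RS_rep[OF F_ring])
    then show "\<exists>Q. Q \<in> Polys F r \<and> poly_eval Q A = d mo" by blast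
  qed
  obtain Qd where Qd: "\<forall>mo\<in>S. Qd mo \<in> Polys F r \<and> poly_eval (Qd mo) A = d mo"
    using bchoice[OF ex3] by blast
  define H where "H = (\<Sum>mo\<in>S. Qd mo * Poly_Mapping.single 0 (mon zb mo))"
  have monL: "mon zb mo \<in> L" if "mo \<in> S" for mo
    using zbL[OF that] by (intro mon_in[OF L_ring])
  have HL: "H \<in> Polys L r"
    unfolding H_def
  proof (intro Polys_sum[OF L_ring] Polys_mult[OF L_ring])
    fix mo assume mo: "mo \<in> S"
    show "Qd mo \<in> Polys L r" using Qd mo Polys_mono[OF FL] by blast
    show "Poly_Mapping.single 0 (mon zb mo) \<in> Polys L r"
      using monL[OF mo] by (intro Polys_single[OF L_ring]) auto
  qed
  have "poly_eval H A = (\<Sum>mo\<in>S. d mo * mon zb mo)"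
    unfolding H_def using Qd by (simp add: poly_eval_sum poly_eval_mult poly_eval_single)
  then have H0: "H = 0" using rel3 uniq[OF HL] by simp
  have "Qd M0 \<noteq> 0" using Qd M0(1) dM0 by auto
  then obtain N where N: "N \<in> Poly_Mapping.keys (Qd M0)"
    by (metis keys_eq_empty ex_in_conv)
  have lH: "(\<Sum>mo\<in>S. Poly_Mapping.lookup (Qd mo) N * mon zb mo) = 0"
  proof -
    have "Poly_Mapping.lookup H N = (\<Sum>mo\<in>S. Poly_Mapping.lookup (Qd mo) N * mon zb mo)"
      by (simp add: H_def lookup_sum lookup_mult_single0)
    then show ?thesis using H0 by simp
  qed
  define f where "f mo = (if mo \<in> S then Poly_Mapping.lookup (Qd mo) N else 0)" for mo
  define q where "q = Abs_poly_mapping f"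
  have finf: "finite {mo. f mo \<noteq> 0}"
  proof (rule finite_subset[OF _ finS])
    show "{mo. f mo \<noteq> 0} \<subseteq> S"
    proof
      fix x assume "x \<in> {mo. f mo \<noteq> 0}"
      then have "f x \<noteq> 0" by simp
      then show "x \<in> S" unfolding f_def by (cases "x \<in> S") simp_all
    qed
  qed
  have lq: "Poly_Mapping.lookup q = f" unfolding q_def using finf by simp
  have fS: "x \<in> S" if "f x \<noteq> 0" for x
    using that unfolding f_def by (cases "x \<in> S") simp_all
  have kq: "Poly_Mapping.keys q \<subseteq> S" using fS by (auto simp: in_keys_iff lq)
  have "q \<noteq> 0"
  proof
    assume "q = 0"
    then have "f M0 = 0" using lq by (metis lookup_zero)
    then show False using M0(1) N by (simp add: f_def in_keys_iff)
  qed
  moreover have "\<forall>mo. Poly_Mapping.lookup q mo \<in> F"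
    using Qd subring_0[OF F_ring] by (auto simp: lq f_def intro: Polys_lookup)
  moreover have "\<forall>mo\<in>Poly_Mapping.keys q. Poly_Mapping.keys mo \<subseteq> {..<m} \<times> UNIV"
    using kq pvars unfolding S_def by blast
  moreover have "poly_eval q zb = 0"
  proof -
    have "poly_eval q zb = (\<Sum>mo\<in>S. Poly_Mapping.lookup q mo * mon zb mo)"
      unfolding poly_eval_Ev using Ev_superset[OF finS kq, of id zb] by simp
    also have "\<dots> = (\<Sum>mo\<in>S. Poly_Mapping.lookup (Qd mo) N * mon zb mo)"
      by (rule sum.cong[OF refl]) (simp add: lq f_def)
    finally show ?thesis using lH by simp
  qed
  ultimately have "alg_dependent F ({..<m} \<times> UNIV) zb"
    unfolding alg_dependent_def by blast
  then show ?thesis unfolding diff_dependent_def zb_def by simp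
qed

end


theorem theorem2p16:
  fixes D :: "'a::field_char_0 \<Rightarrow> 'a" and F :: "'a set"
    and r n m :: nat and u ybar ubar :: "nat \<Rightarrow> 'a"
    and P :: "nat \<Rightarrow> 'a dpoly"
  assumes "is_derivation D"
    and "diff_subfield D F"
    and "\<not> diff_dependent D F {..<r} u"
    and "\<forall>i<m. is_diff_poly F r n (P i)"
    and "\<not> diff_dependent D (diff_field_gen D F (ybar ` {..<n})) {..<r} u"
    and "diff_dependent D (diff_field_gen D F (u ` {..<r})) {..<m}
           (\<lambda>i. dpoly_eval D (P i) u ybar)"
    and "\<forall>j<r. ubar j \<in> F"
  shows "diff_dependent D F {..<m} (\<lambda>i. dpoly_eval D (P i) ubar ybar)"
proof -
  have sp: "spec D F r n u ybar ubar"
    using assms(1,2,5,7) by (simp add: spec_def)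
  show ?thesis by (rule spec.main[OF sp assms(4) assms(6)])
qed

end
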